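(* The set $T$ is a reduced Gröbner basis of $I_\phi=I_{\phi'}\cap\mathbb{K}[x_{i|A}:i\notin A]$ with respect to the restriction of the graded reverse lexicographic order $<$ to $\mathbb{K}[x_{i|A}:i\notin A]$.
   Context: $\phi:\mathbb{K}[x_{i|A}: i\in[n],A\subseteq[n]\setminus\{i\}]\to\mathbb{K}[y_i,\beta_j]$, $x_{i|A}\mapsto y_i\prod_{j\in A}\beta_j$; $\phi'$ is its extension to all $x_{i|A}$, $A\subseteq[n]$; $I_\phi=\ker\phi$, $I_{\phi'}=\ker\phi'$. $L$ is the lattice on the variables $x_{i|A}$ with $x_{i|A}\le x_{j|B}$ iff $i\le j$ and $A\subseteq B$. $G_L=\{x_{i|A}x_{j|B}-x_{\min(i,j)|A\cap B}x_{\max(i,j)|A\cup B}: x_{i|A},x_{j|B}\text{ incomparable}\}$. $T=T_1\cup T_2$, where $T_1$ is the set of elements of $G_L$ all of whose variables lie in $\mathbb{K}[x_{i|A}:i\notin A]$, and $T_2=\{x_{i|A}x_{j|B}-x_{i|(A\cap B)\cup\{j\}}x_{j|(A\setminus\{j\})\cup B}: i<j,\ i\notin A,\ j\notin B,\ j\in A,\ x_{i|A},x_{j|B}\text{ incomparable in }L\}$. Variables are totally ordered by $x_{i|A}\prec x_{j|B}$ iff $i<j$, or $i=j$ and $|A|<|B|$, or $i=j$, $|A|=|B|$ and $\min(A\setminus B)<\min(B\setminus A)$; indexing them increasingly, $x^u<x^v$ iff $\deg x^u<\deg x^v$, or degrees are equal and the rightmost nonzero entry of $v-u$ is negative. *)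

theory Defs
  imports "HOL-Library.Poly_Mapping"
begin

type_synonym ('v, 'k) mpoly = "('v \<Rightarrow>\<^sub>0 nat) \<Rightarrow>\<^sub>0 'k"

definition Var :: "'v \<Rightarrow> ('v, 'k::comm_ring_1) mpoly" where
  "Var v = Poly_Mapping.single (Poly_Mapping.single v 1) 1"

definition const :: "'k::comm_ring_1 \<Rightarrow> ('v, 'k) mpoly" where
  "const c = Poly_Mapping.single 0 c"

definition in_vars :: "'v set \<Rightarrow> (('v \<Rightarrow>\<^sub>0 nat) \<Rightarrow>\<^sub>0 'k::zero) \<Rightarrow> bool" where
  "in_vars V p \<longleftrightarrow> (\<forall>m\<in>Poly_Mapping.keys p. Poly_Mapping.keys m \<subseteq> V)"

definition subst :: "('v \<Rightarrow> ('w, 'k::comm_ring_1) mpoly) \<Rightarrow> ('v, 'k) mpoly \<Rightarrow> ('w, 'k) mpoly" where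
  "subst img p = (\<Sum>m\<in>Poly_Mapping.keys p. const (Poly_Mapping.lookup p m) * (\<Prod>v\<in>Poly_Mapping.keys m. (img v) ^ (Poly_Mapping.lookup m v)))"

text \<open>Variables x_{i|A} are pairs (i, A) with i in [n] = {1..n}, A a subset of [n].
 Target variables: Inl i stands for y_i, Inr j stands for beta_j.\<close>

type_synonym var = "nat \<times> nat set"

definition allvars :: "nat \<Rightarrow> var set" where
  "allvars n = {(i, A). i \<in> {1..n} \<and> A \<subseteq> {1..n}}"

definition vars :: "nat \<Rightarrow> var set" where
  "vars n = {(i, A). i \<in> {1..n} \<and> A \<subseteq> {1..n} \<and> i \<notin> A}"

definition phi_img :: "var \<Rightarrow> (nat + nat, 'k::comm_ring_1) mpoly" where
  "phi_img v = Var (Inl (fst v)) * (\<Prod>j\<in>snd v. Var (Inr j))"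

definition I_phi :: "nat \<Rightarrow> (var, 'k::comm_ring_1) mpoly set" where
  "I_phi n = {p. in_vars (vars n) p \<and> subst phi_img p = 0}"

definition I_phi' :: "nat \<Rightarrow> (var, 'k::comm_ring_1) mpoly set" where
  "I_phi' n = {p. in_vars (allvars n) p \<and> subst phi_img p = 0}"

definition leqL :: "var \<Rightarrow> var \<Rightarrow> bool" where
  "leqL a b \<longleftrightarrow> fst a \<le> fst b \<and> snd a \<subseteq> snd b"

definition incomparable :: "var \<Rightarrow> var \<Rightarrow> bool" where
  "incomparable a b \<longleftrightarrow> \<not> leqL a b \<and> \<not> leqL b a"

definition G_L :: "nat \<Rightarrow> (var, 'k::comm_ring_1) mpoly set" where
  "G_L n = {Var (i, A) * Var (j, B) - Var (min i j, A \<inter> B) * Var (max i j, A \<union> B) | i A j B.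
              (i, A) \<in> allvars n \<and> (j, B) \<in> allvars n \<and> incomparable (i, A) (j, B)}"

definition T1 :: "nat \<Rightarrow> (var, 'k::comm_ring_1) mpoly set" where
  "T1 n = {g \<in> G_L n. in_vars (vars n) g}"

definition T2 :: "nat \<Rightarrow> (var, 'k::comm_ring_1) mpoly set" where
  "T2 n = {Var (i, A) * Var (j, B) - Var (i, (A \<inter> B) \<union> {j}) * Var (j, (A - {j}) \<union> B) | i A j B.
              (i, A) \<in> allvars n \<and> (j, B) \<in> allvars n \<and> i < j \<and> i \<notin> A \<and> j \<notin> B \<and> j \<in> A
              \<and> incomparable (i, A) (j, B)}"

definition T :: "nat \<Rightarrow> (var, 'k::comm_ring_1) mpoly set" where
  "T n = T1 n \<union> T2 n"

definition var_less :: "var \<Rightarrow> var \<Rightarrow> bool" where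
  "var_less a b \<longleftrightarrow> fst a < fst b
     \<or> (fst a = fst b \<and> card (snd a) < card (snd b))
     \<or> (fst a = fst b \<and> card (snd a) = card (snd b) \<and> Min (snd a - snd b) < Min (snd b - snd a))"

definition mdeg :: "('v \<Rightarrow>\<^sub>0 nat) \<Rightarrow> nat" where
  "mdeg u = (\<Sum>v\<in>Poly_Mapping.keys u. Poly_Mapping.lookup u v)"

text \<open>Graded reverse lexicographic order: x^u < x^v iff deg u < deg v, or the degrees
 agree and the entry of v - u at the var_less-largest variable where u and v differ
 (the rightmost nonzero entry of v - u) is negative.\<close>
definition mono_less :: "(var \<Rightarrow>\<^sub>0 nat) \<Rightarrow> (var \<Rightarrow>\<^sub>0 nat) \<Rightarrow> bool" where
  "mono_less u v \<longleftrightarrow> mdeg u < mdeg v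
     \<or> (mdeg u = mdeg v \<and>
        (\<exists>w. Poly_Mapping.lookup v w < Poly_Mapping.lookup u w \<and>
             (\<forall>w'. var_less w w' \<longrightarrow> Poly_Mapping.lookup u w' = Poly_Mapping.lookup v w')))"

definition lm :: "(var, 'k::zero) mpoly \<Rightarrow> (var \<Rightarrow>\<^sub>0 nat)" where
  "lm p = (THE m. m \<in> Poly_Mapping.keys p \<and> (\<forall>m'\<in>Poly_Mapping.keys p. m' \<noteq> m \<longrightarrow> mono_less m' m))"

definition lc :: "(var, 'k::zero) mpoly \<Rightarrow> 'k" where
  "lc p = Poly_Mapping.lookup p (lm p)"

definition mdvd :: "('v \<Rightarrow>\<^sub>0 nat) \<Rightarrow> ('v \<Rightarrow>\<^sub>0 nat) \<Rightarrow> bool" where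
  "mdvd u v \<longleftrightarrow> (\<forall>w. Poly_Mapping.lookup u w \<le> Poly_Mapping.lookup v w)"

definition is_reduced_GB :: "(var, 'k::field) mpoly set \<Rightarrow> (var, 'k) mpoly set \<Rightarrow> bool" where
  "is_reduced_GB I G \<longleftrightarrow>
     finite G \<and> G \<subseteq> I
     \<and> (\<forall>f\<in>I. f \<noteq> 0 \<longrightarrow> (\<exists>g\<in>G. mdvd (lm g) (lm f)))
     \<and> (\<forall>g\<in>G. g \<noteq> 0 \<and> lc g = 1)
     \<and> (\<forall>g\<in>G. \<forall>h\<in>G. g \<noteq> h \<longrightarrow> (\<forall>m\<in>Poly_Mapping.keys g. \<not> mdvd (lm h) m))"

end

theory Submission
  imports Defs
begin

definition Rs :: "nat set \<Rightarrow> nat set \<Rightarrow> bool" where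
  "Rs A B \<longleftrightarrow> (\<exists>z. z \<in> A \<and> z \<notin> B \<and> (\<forall>y<z. y \<in> A \<longleftrightarrow> y \<in> B))"

lemma card_eq_diff_ne:
  assumes "finite A" "finite B" "card A = card B" "A \<noteq> B"
  shows "A - B \<noteq> {}" "B - A \<noteq> {}"
proof -
  show "A - B \<noteq> {}"
  proof
    assume "A - B = {}" then have "A \<subseteq> B" by blast
    then have "A = B" using assms card_subset_eq by metis
    with assms show False by simp
  qed
  show "B - A \<noteq> {}"
  proof
    assume "B - A = {}" then have "B \<subseteq> A" by blast
    then have "B = A" using assms card_subset_eq by metis
    with assms show False by simp
  qed
qed

lemma Min_Rs:
  assumes "finite A" "finite B" "card A = card B"
  shows "Min (A - B) < Min (B - A) \<longleftrightarrow> Rs A B"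
proof
  assume h: "Min (A - B) < Min (B - A)"
  then have "A \<noteq> B" by auto
  note ne = card_eq_diff_ne[OF assms this]
  define z where "z = Min (A - B)"
  have zA: "z \<in> A - B" using ne assms z_def Min_in by (metis finite_Diff)
  have "\<forall>y<z. y \<in> A \<longleftrightarrow> y \<in> B"
  proof (intro allI impI)
    fix y assume "y < z"
    show "y \<in> A \<longleftrightarrow> y \<in> B"
    proof (rule ccontr)
      assume "\<not> (y \<in> A \<longleftrightarrow> y \<in> B)"
      then consider "y \<in> A - B" | "y \<in> B - A" by blast
      then show False
      proof cases
        case 1 then have "z \<le> y" unfolding z_def using assms by (simp add: Min_le)
        with \<open>y < z\<close> show False by simp
      next
        case 2 then have "Min (B - A) \<le> y" using assms by (simp add: Min_le)
        with \<open>y < z\<close> h z_def show False by simp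
      qed
    qed
  qed
  then show "Rs A B" unfolding Rs_def using zA by blast
next
  assume "Rs A B"
  then obtain z where z: "z \<in> A" "z \<notin> B" "\<forall>y<z. y \<in> A \<longleftrightarrow> y \<in> B" unfolding Rs_def by blast
  then have "A \<noteq> B" by auto
  note ne = card_eq_diff_ne[OF assms this]
  have "Min (A - B) \<le> z" using z assms by (simp add: Min_le)
  moreover have w: "Min (B - A) \<in> B - A" using ne assms by (metis Min_in finite_Diff)
  then have "\<not> Min (B - A) < z" using z by blast
  moreover have "Min (B - A) \<noteq> z" using w z by blast
  ultimately show "Min (A - B) < Min (B - A)" by linarith
qed

lemma Rs_trans: "Rs A B \<Longrightarrow> Rs B C \<Longrightarrow> Rs A C"
  unfolding Rs_def
proof -
  assume "\<exists>z. z \<in> A \<and> z \<notin> B \<and> (\<forall>y<z. (y \<in> A) = (y \<in> B))"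
     and "\<exists>z. z \<in> B \<and> z \<notin> C \<and> (\<forall>y<z. (y \<in> B) = (y \<in> C))"
  then obtain z1 z2 where a: "z1 \<in> A" "z1 \<notin> B" "\<forall>y<z1. (y \<in> A) = (y \<in> B)"
    and b: "z2 \<in> B" "z2 \<notin> C" "\<forall>y<z2. (y \<in> B) = (y \<in> C)" by blast
  consider "z1 < z2" | "z2 < z1" | "z1 = z2" by linarith
  then show "\<exists>z. z \<in> A \<and> z \<notin> C \<and> (\<forall>y<z. (y \<in> A) = (y \<in> C))"
  proof cases
    case 1 then show ?thesis using a b by (metis order.strict_trans)
  next
    case 2 then show ?thesis using a b by (metis order.strict_trans)
  next
    case 3 then show ?thesis using a b by blast
  qed
qed

lemma Rs_irrefl: "\<not> Rs A A" unfolding Rs_def by blast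

definition fsv :: "var \<Rightarrow> bool" where "fsv v \<longleftrightarrow> finite (snd v)"

lemma var_less_alt:
  assumes "fsv a" "fsv b"
  shows "var_less a b \<longleftrightarrow> fst a < fst b \<or> (fst a = fst b \<and> card (snd a) < card (snd b))
     \<or> (fst a = fst b \<and> card (snd a) = card (snd b) \<and> Rs (snd a) (snd b))"
  using Min_Rs[of "snd a" "snd b"] assms unfolding var_less_def fsv_def by auto

lemma var_less_irrefl: "\<not> var_less a a"
  unfolding var_less_def by auto

lemma var_less_trans:
  assumes "fsv a" "fsv b" "fsv c" "var_less a b" "var_less b c"
  shows "var_less a c"
  using assms(4,5) unfolding var_less_alt[OF assms(1,2)] var_less_alt[OF assms(2,3)] var_less_alt[OF assms(1,3)]
  using Rs_trans by (smt (verit) order.strict_trans)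

lemma var_less_total:
  assumes "fsv a" "fsv b" "a \<noteq> b"
  shows "var_less a b \<or> var_less b a"
proof -
  obtain i A j B where ab: "a = (i, A)" "b = (j, B)" by (cases a, cases b) auto
  show ?thesis
  proof (cases "i = j \<and> card A = card B")
    case True
    then have "A \<noteq> B" using ab assms by auto
    note ne = card_eq_diff_ne[OF _ _ _ this]
    have fin: "finite A" "finite B" using assms ab fsv_def by auto
    have "Min (A - B) \<in> A - B" "Min (B - A) \<in> B - A" using ne fin True by (metis Min_in finite_Diff)+
    then have "Min (A - B) \<noteq> Min (B - A)" by auto
    then show ?thesis using True ab unfolding var_less_def by auto
  next
    case False
    then show ?thesis using ab unfolding var_less_def by auto
  qed
qed

lemma var_less_asym: "fsv a \<Longrightarrow> fsv b \<Longrightarrow> var_less a b \<Longrightarrow> \<not> var_less b a"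
  using var_less_trans var_less_irrefl by blast

lemma finite_max_rel:
  assumes "finite S" "S \<noteq> {}"
    and tr: "\<forall>x\<in>S. \<forall>y\<in>S. \<forall>z\<in>S. r x y \<longrightarrow> r y z \<longrightarrow> r x z"
    and tot: "\<forall>x\<in>S. \<forall>y\<in>S. x \<noteq> y \<longrightarrow> r x y \<or> r y x"
  shows "\<exists>m\<in>S. \<forall>y\<in>S. y \<noteq> m \<longrightarrow> r y m"
  using assms(1,2) tr tot
proof (induction S rule: finite_ne_induct)
  case (singleton x) then show ?case by auto
next
  case (insert x F)
  then obtain m where m: "m \<in> F" "\<forall>y\<in>F. y \<noteq> m \<longrightarrow> r y m" by (metis insert_iff)
  show ?case
  proof (cases "r m x")
    case True
    have "\<forall>y\<in>insert x F. y \<noteq> x \<longrightarrow> r y x"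
    proof (intro ballI impI)
      fix y assume "y \<in> insert x F" "y \<noteq> x"
      then have "y \<in> F" by auto
      show "r y x"
      proof (cases "y = m")
        case True with \<open>r m x\<close> show ?thesis by simp
      next
        case False with m \<open>y \<in> F\<close> have "r y m" by auto
        with True insert.prems(1) \<open>y \<in> F\<close> m(1) show ?thesis by blast
      qed
    qed
    then show ?thesis by blast
  next
    case False
    then have "x \<noteq> m \<longrightarrow> r x m" using insert.prems(2) m(1) by blast
    then show ?thesis using m by auto
  qed
qed

abbreviation lk :: "('a \<Rightarrow>\<^sub>0 'b::zero) \<Rightarrow> 'a \<Rightarrow> 'b" where "lk \<equiv> Poly_Mapping.lookup"
abbreviation kz :: "('a \<Rightarrow>\<^sub>0 'b::zero) \<Rightarrow> 'a set" where "kz \<equiv> Poly_Mapping.keys"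

definition fsm :: "(var \<Rightarrow>\<^sub>0 nat) \<Rightarrow> bool" where "fsm u \<longleftrightarrow> (\<forall>v\<in>kz u. fsv v)"

lemma fsm_zero: "fsm u \<Longrightarrow> \<not> fsv w \<Longrightarrow> lk u w = 0"
  unfolding fsm_def by (meson in_keys_iff)

lemma mdeg_sum: "finite S \<Longrightarrow> kz u \<subseteq> S \<Longrightarrow> mdeg u = (\<Sum>v\<in>S. lk u v)"
  unfolding mdeg_def by (rule sum.mono_neutral_left) (auto simp: in_keys_iff)

lemma mdeg_add: "mdeg (u + w) = mdeg u + mdeg w"
proof -
  let ?S = "kz u \<union> kz w"
  have "mdeg (u + w) = (\<Sum>v\<in>?S. lk (u + w) v)" by (rule mdeg_sum) (use keys_add[of u w] in auto)
  also have "\<dots> = (\<Sum>v\<in>?S. lk u v) + (\<Sum>v\<in>?S. lk w v)" by (simp add: lookup_add sum.distrib)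
  also have "\<dots> = mdeg u + mdeg w" by (subst (1 2) mdeg_sum[of ?S]) auto
  finally show ?thesis .
qed

lemma mono_less_irrefl: "\<not> mono_less u u"
  unfolding mono_less_def by auto

lemma mono_less_compat: "mono_less u v \<Longrightarrow> mono_less (r + u) (r + v)"
  unfolding mono_less_def by (auto simp: mdeg_add lookup_add)

lemma mono_less_trans:
  assumes fs: "fsm u" "fsm v" "fsm w" and uv: "mono_less u v" and vw: "mono_less v w"
  shows "mono_less u w"
proof (cases "mdeg u = mdeg v \<and> mdeg v = mdeg w")
  case False
  then show ?thesis using uv vw unfolding mono_less_def by auto
next
  case True
  obtain x1 where x1: "lk v x1 < lk u x1" "\<forall>w'. var_less x1 w' \<longrightarrow> lk u w' = lk v w'"
    using uv True unfolding mono_less_def by auto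
  obtain x2 where x2: "lk w x2 < lk v x2" "\<forall>w'. var_less x2 w' \<longrightarrow> lk v w' = lk w w'"
    using vw True unfolding mono_less_def by auto
  have f1: "fsv x1" using x1(1) fs(1) fsm_zero by fastforce
  have f2: "fsv x2" using x2(1) fs(2) fsm_zero by fastforce
  have deg: "mdeg u = mdeg w" using True by simp
  consider "x1 = x2" | "var_less x1 x2" | "var_less x2 x1" using var_less_total[OF f1 f2] by blast
  then show ?thesis
  proof cases
    case 1
    then show ?thesis unfolding mono_less_def using deg x1 x2
      by (metis order.strict_trans)
  next
    case 2
    have "lk u x2 = lk v x2" using x1(2) 2 by blast
    then have "lk w x2 < lk u x2" using x2(1) by simp
    moreover have "\<forall>w'. var_less x2 w' \<longrightarrow> lk u w' = lk w w'"
    proof (intro allI impI)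
      fix w' assume a: "var_less x2 w'"
      show "lk u w' = lk w w'"
      proof (cases "fsv w'")
        case True
        then have "var_less x1 w'" using var_less_trans[OF f1 f2 True 2 a] by simp
        then show ?thesis using x1(2) x2(2) a by metis
      next
        case False then show ?thesis using fsm_zero fs by metis
      qed
    qed
    ultimately show ?thesis unfolding mono_less_def using deg by blast
  next
    case 3
    have "lk v x1 = lk w x1" using x2(2) 3 by blast
    then have "lk w x1 < lk u x1" using x1(1) by simp
    moreover have "\<forall>w'. var_less x1 w' \<longrightarrow> lk u w' = lk w w'"
    proof (intro allI impI)
      fix w' assume a: "var_less x1 w'"
      show "lk u w' = lk w w'"
      proof (cases "fsv w'")
        case True
        then have "var_less x2 w'" using var_less_trans[OF f2 f1 True 3 a] by simp
        then show ?thesis using x1(2) x2(2) a by metis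
      next
        case False then show ?thesis using fsm_zero fs by metis
      qed
    qed
    ultimately show ?thesis unfolding mono_less_def using deg by blast
  qed
qed


lemma mono_less_asym: "fsm u \<Longrightarrow> fsm v \<Longrightarrow> mono_less u v \<Longrightarrow> \<not> mono_less v u"
  using mono_less_trans[of u v u] mono_less_irrefl[of u] by blast

lemma mono_less_total:
  assumes fs: "fsm u" "fsm v" and ne: "u \<noteq> v"
  shows "mono_less u v \<or> mono_less v u"
proof (cases "mdeg u = mdeg v")
  case False then show ?thesis unfolding mono_less_def by linarith
next
  case True
  define D where "D = {x. lk u x \<noteq> lk v x}"
  have "D \<subseteq> kz u \<union> kz v" unfolding D_def by (auto simp: in_keys_iff)
  then have finD: "finite D" using finite_subset finite_keys finite_Un by metis
  have "D \<noteq> {}"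
  proof
    assume "D = {}"
    then have "\<And>x. lk u x = lk v x" unfolding D_def by (metis (mono_tags, lifting) empty_Collect_eq)
    then have "u = v" by (rule poly_mapping_eqI)
    with ne show False by simp
  qed
  have fsD: "\<forall>x\<in>D. fsv x"
  proof
    fix x assume "x \<in> D"
    then have "lk u x \<noteq> 0 \<or> lk v x \<noteq> 0" unfolding D_def by auto
    then show "fsv x" using fsm_zero fs by metis
  qed
  have "\<exists>m\<in>D. \<forall>y\<in>D. y \<noteq> m \<longrightarrow> var_less y m"
    proof (rule finite_max_rel[OF finD \<open>D \<noteq> {}\<close>])
    show "\<forall>x\<in>D. \<forall>y\<in>D. \<forall>z\<in>D. var_less x y \<longrightarrow> var_less y z \<longrightarrow> var_less x z"
      using fsD var_less_trans by metis
    show "\<forall>x\<in>D. \<forall>y\<in>D. x \<noteq> y \<longrightarrow> var_less x y \<or> var_less y x"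
      using fsD var_less_total by metis
  qed
  then obtain x where x: "x \<in> D" "\<forall>y\<in>D. y \<noteq> x \<longrightarrow> var_less y x" by blast
  have above: "\<forall>w'. var_less x w' \<longrightarrow> lk u w' = lk v w'"
  proof (intro allI impI)
    fix w' assume a: "var_less x w'"
    show "lk u w' = lk v w'"
    proof (rule ccontr)
      assume "lk u w' \<noteq> lk v w'"
      then have wD: "w' \<in> D" unfolding D_def by simp
      then have "w' = x \<or> var_less w' x" using x by blast
      moreover have "w' \<noteq> x" using a var_less_irrefl by metis
      moreover have "\<not> var_less w' x" using var_less_asym[of x w'] fsD wD x(1) a by blast
      ultimately show False by blast
    qed
  qed
  have "lk u x \<noteq> lk v x" using x(1) D_def by simp
  then consider "lk v x < lk u x" | "lk u x < lk v x" by linarith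
  then show ?thesis
  proof cases
    case 1 then have "mono_less u v" unfolding mono_less_def using True above by blast
    then show ?thesis ..
  next
    case 2
    have "\<forall>w'. var_less x w' \<longrightarrow> lk v w' = lk u w'" using above by simp
    then have "mono_less v u" unfolding mono_less_def using True[symmetric] 2 by blast
    then show ?thesis ..
  qed
qed

definition bad :: "var \<Rightarrow> var \<Rightarrow> bool" where
  "bad p q \<longleftrightarrow> (fst p < fst q \<and> \<not> (snd p - {fst q} \<subseteq> snd q))
     \<or> (fst p = fst q \<and> \<not> (snd p \<subseteq> snd q \<or> snd q \<subseteq> snd p))
     \<or> (fst q < fst p \<and> \<not> (snd q - {fst p} \<subseteq> snd p))"

lemma bad_sym: "bad p q = bad q p" unfolding bad_def by auto

lemma bad_irrefl: "\<not> bad p p" unfolding bad_def by auto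

definition tr0 :: "var \<Rightarrow> var \<Rightarrow> var \<times> var" where
  "tr0 p q = ((fst p, (snd p \<inter> snd q) \<union> ({fst q} \<inter> snd p)), (fst q, (snd p - {fst q}) \<union> snd q))"

definition tr :: "var \<Rightarrow> var \<Rightarrow> var \<times> var" where
  "tr p q = (if fst q < fst p then tr0 q p else tr0 p q)"

definition mon :: "var \<Rightarrow> var \<Rightarrow> (var \<Rightarrow>\<^sub>0 nat)" where
  "mon p q = Poly_Mapping.single p 1 + Poly_Mapping.single q 1"

definition mv :: "nat \<Rightarrow> (var \<Rightarrow>\<^sub>0 nat) \<Rightarrow> bool" where "mv n u \<longleftrightarrow> kz u \<subseteq> vars n"

definition acnt :: "nat \<Rightarrow> (var \<Rightarrow>\<^sub>0 nat) \<Rightarrow> nat \<Rightarrow> nat" where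
  "acnt n u i = (\<Sum>v\<in>{v\<in>vars n. fst v = i}. lk u v)"

definition bcnt :: "nat \<Rightarrow> (var \<Rightarrow>\<^sub>0 nat) \<Rightarrow> nat \<Rightarrow> nat" where
  "bcnt n u k = (\<Sum>v\<in>{v\<in>vars n. k \<in> snd v}. lk u v)"

definition standard :: "(var \<Rightarrow>\<^sub>0 nat) \<Rightarrow> bool" where
  "standard u \<longleftrightarrow> (\<forall>p q. 0 < lk u p \<longrightarrow> 0 < lk u q \<longrightarrow> \<not> bad p q)"

lemma finite_vars: "finite (vars n)"
  unfolding vars_def by (rule finite_subset[of _ "{1..n} \<times> Pow {1..n}"]) auto

lemma vars_fsv: "v \<in> vars n \<Longrightarrow> fsv v"
  unfolding vars_def fsv_def using finite_subset[of _ "{1..n}"] by auto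

lemma mv_fsm: "mv n u \<Longrightarrow> fsm u"
  unfolding mv_def fsm_def using vars_fsv by blast

lemma acnt_add: "acnt n (u + w) i = acnt n u i + acnt n w i"
  unfolding acnt_def by (simp add: lookup_add sum.distrib)

lemma bcnt_add: "bcnt n (u + w) i = bcnt n u i + bcnt n w i"
  unfolding bcnt_def by (simp add: lookup_add sum.distrib)

lemma lk_single: "lk (Poly_Mapping.single p (1::nat)) x = (if p = x then 1 else 0)"
  by (simp add: lookup_single when_def)

lemma sum_if_eq: "finite S \<Longrightarrow> (\<Sum>v\<in>S. (if p = v then (1::nat) else 0)) = (if p \<in> S then 1 else 0)"
  by (simp add: sum.delta)

lemma fin_vars_sub: "finite {v\<in>vars n. P v}"
  by (rule finite_subset[OF _ finite_vars]) auto

lemma acnt_single: "acnt n (Poly_Mapping.single p 1) i = (if p \<in> vars n \<and> fst p = i then 1 else 0)"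
  unfolding acnt_def lk_single by (simp add: sum.delta fin_vars_sub)

lemma bcnt_single: "bcnt n (Poly_Mapping.single p 1) k = (if p \<in> vars n \<and> k \<in> snd p then 1 else 0)"
  unfolding bcnt_def lk_single by (simp add: sum.delta fin_vars_sub)

lemma lk_mon: "lk (mon p q) x = (if p = x then 1 else 0) + (if q = x then 1 else 0)"
  unfolding mon_def by (simp add: lookup_add lookup_single when_def)

lemma mdeg_single: "mdeg (Poly_Mapping.single p (1::nat)) = 1"
  unfolding mdeg_def by simp

lemma mdeg_mon: "mdeg (mon p q) = 2"
  unfolding mon_def mdeg_add mdeg_single by simp

lemma kz_mon: "kz (mon p q) = {p, q}"
proof (rule set_eqI)
  fix x
  have "x \<in> kz (mon p q) \<longleftrightarrow> lk (mon p q) x \<noteq> 0" by (rule in_keys_iff)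
  also have "\<dots> \<longleftrightarrow> x \<in> {p, q}" unfolding lk_mon by (cases "x = p"; cases "x = q") simp_all
  finally show "x \<in> kz (mon p q) \<longleftrightarrow> x \<in> {p, q}" .
qed

lemma not_var_less_1: "k < j \<Longrightarrow> \<not> var_less (j, X) (k, Y)"
  unfolding var_less_def by auto

lemma not_var_less_2: assumes "finite X" "Y \<subset> X" shows "\<not> var_less (j, X) (j, Y)"
proof -
  have "card Y < card X" using psubset_card_mono assms by blast
  then show ?thesis unfolding var_less_def by simp
qed

lemma tr0_props:
  assumes p: "(i, A) \<in> vars n" and q: "(j, B) \<in> vars n" and ij: "i \<le> j" and b: "bad (i, A) (j, B)"
    and cd: "tr0 (i, A) (j, B) = (c, d)"
  shows "c \<in> vars n" "d \<in> vars n"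
    "acnt n (mon c d) = acnt n (mon (i, A) (j, B))"
    "bcnt n (mon c d) = bcnt n (mon (i, A) (j, B))"
    "mono_less (mon c d) (mon (i, A) (j, B))"
    "\<not> bad c d"
    "fst c = i" "fst d = j"
proof -
  have c: "c = (i, (A \<inter> B) \<union> ({j} \<inter> A))"
  proof -
    have "c = fst (tr0 (i, A) (j, B))" using cd by simp
    also have "\<dots> = (i, (A \<inter> B) \<union> ({j} \<inter> A))" unfolding tr0_def by simp
    finally show ?thesis .
  qed
  have d: "d = (j, (A - {j}) \<union> B)"
  proof -
    have "d = snd (tr0 (i, A) (j, B))" using cd by simp
    also have "\<dots> = (j, (A - {j}) \<union> B)" unfolding tr0_def by simp
    finally show ?thesis .
  qed
  have vp: "i \<in> {1..n}" "A \<subseteq> {1..n}" "i \<notin> A" using p unfolding vars_def by auto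
  have vq: "j \<in> {1..n}" "B \<subseteq> {1..n}" "j \<notin> B" using q unfolding vars_def by auto
  have finA: "finite A" using vp(2) finite_subset[of A "{1..n}"] by simp
  have finB: "finite B" using vq(2) finite_subset[of B "{1..n}"] by simp
  have nsub: "\<not> (A - {j} \<subseteq> B)" using b ij vp(3) unfolding bad_def by (cases "i = j") auto
  have nsub2: "i = j \<Longrightarrow> \<not> B \<subseteq> A" using b unfolding bad_def by auto
  show "c \<in> vars n" using vp vq unfolding c vars_def by auto
  show "d \<in> vars n" using vp vq unfolding d vars_def by auto
  show "fst c = i" "fst d = j" using c d by auto
  show "acnt n (mon c d) = acnt n (mon (i, A) (j, B))"
  proof
    fix x
    show "acnt n (mon c d) x = acnt n (mon (i, A) (j, B)) x"
      using \<open>c \<in> vars n\<close> \<open>d \<in> vars n\<close> p q unfolding mon_def acnt_add acnt_single c d by simp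
  qed
  show "bcnt n (mon c d) = bcnt n (mon (i, A) (j, B))"
  proof
    fix x
    show "bcnt n (mon c d) x = bcnt n (mon (i, A) (j, B)) x"
      using \<open>c \<in> vars n\<close> \<open>d \<in> vars n\<close> p q vq(3) unfolding mon_def bcnt_add bcnt_single c d
      by (cases "x = j") auto
  qed
  show "\<not> bad c d"
    using vp vq ij unfolding bad_def c d by (cases "i = j") auto
  have finB': "finite ((A - {j}) \<union> B)" using finA finB by simp
  have BB': "B \<subset> (A - {j}) \<union> B" using nsub by blast
  have dq: "d \<noteq> (j, B)" using BB' d by auto
  have dp: "d \<noteq> (i, A)"
  proof
    assume "d = (i, A)"
    then have "i = j" "A = (A - {j}) \<union> B" using d by auto
    then show False using nsub2 by blast
  qed
  have nq: "\<not> var_less d (j, B)" unfolding d using not_var_less_2[OF finB' BB'] .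
  have np: "\<not> var_less d (i, A)"
  proof (cases "i = j")
    case True
    have "A \<subset> (A - {j}) \<union> B" using nsub2 True vp(3) by blast
    then show ?thesis unfolding d using not_var_less_2[OF finB'] True by simp
  next
    case False then show ?thesis unfolding d using not_var_less_1 ij by simp
  qed
  have nc: "\<not> var_less d c"
  proof (cases "i = j")
    case True
    have "(A \<inter> B) \<union> ({j} \<inter> A) \<subset> (A - {j}) \<union> B" using nsub True vp(3) by blast
    then show ?thesis unfolding d c using not_var_less_2[OF finB'] True by simp
  next
    case False then show ?thesis unfolding d c using not_var_less_1 ij by simp
  qed
  have nd: "\<not> var_less d d" by (rule var_less_irrefl)
  have "lk (mon (i, A) (j, B)) d < lk (mon c d) d" using dp dq unfolding lk_mon by simp
  moreover have "\<forall>w'. var_less d w' \<longrightarrow> lk (mon c d) w' = lk (mon (i, A) (j, B)) w'"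
  proof (intro allI impI)
    fix w' assume "var_less d w'"
    then have "w' \<noteq> d" "w' \<noteq> c" "w' \<noteq> (i, A)" "w' \<noteq> (j, B)" using nq np nc nd by auto
    then show "lk (mon c d) w' = lk (mon (i, A) (j, B)) w'" unfolding lk_mon by auto
  qed
  ultimately show "mono_less (mon c d) (mon (i, A) (j, B))"
    unfolding mono_less_def mdeg_mon by blast
qed

lemma mon_sym: "mon p q = mon q p" unfolding mon_def by (simp add: add.commute)

lemma tr_props:
  assumes p: "p \<in> vars n" and q: "q \<in> vars n" and b: "bad p q" and cd: "tr p q = (c, d)"
  shows "c \<in> vars n" "d \<in> vars n"
    "acnt n (mon c d) = acnt n (mon p q)"
    "bcnt n (mon c d) = bcnt n (mon p q)"
    "mono_less (mon c d) (mon p q)"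
    "\<not> bad c d"
proof -
  obtain i A where pi: "p = (i, A)" by (cases p)
  obtain j B where qj: "q = (j, B)" by (cases q)
  have "(c \<in> vars n \<and> d \<in> vars n \<and> acnt n (mon c d) = acnt n (mon p q) \<and>
    bcnt n (mon c d) = bcnt n (mon p q) \<and> mono_less (mon c d) (mon p q) \<and> \<not> bad c d)"
  proof (cases "j < i")
    case True
    then have t: "tr0 (j, B) (i, A) = (c, d)" using cd unfolding tr_def pi qj by simp
    have b': "bad (j, B) (i, A)" using b bad_sym pi qj by metis
    have ji: "j \<le> i" using True by simp
    note r = tr0_props[OF q[unfolded qj] p[unfolded pi] ji b' t]
    show ?thesis using r mon_sym pi qj by metis
  next
    case False
    then have t: "tr0 (i, A) (j, B) = (c, d)" using cd unfolding tr_def pi qj by simp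
    have b': "bad (i, A) (j, B)" using b pi qj by simp
    have ij: "i \<le> j" using False by simp
    note r = tr0_props[OF p[unfolded pi] q[unfolded qj] ij b' t]
    show ?thesis using r pi qj by simp
  qed
  then show "c \<in> vars n" "d \<in> vars n"
    "acnt n (mon c d) = acnt n (mon p q)"
    "bcnt n (mon c d) = bcnt n (mon p q)"
    "mono_less (mon c d) (mon p q)"
    "\<not> bad c d" by simp_all
qed

lemma tr_sym:
  assumes p: "p \<in> vars n" and q: "q \<in> vars n"
  shows "tr q p = tr p q"
proof -
  obtain i A where pi: "p = (i, A)" by (cases p)
  obtain j B where qj: "q = (j, B)" by (cases q)
  have "i \<notin> A" "j \<notin> B" using p q pi qj unfolding vars_def by auto
  then show ?thesis unfolding tr_def tr0_def pi qj
    by (cases "i < j"; cases "j < i") (auto simp: Int_commute)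
qed

lemma sum_pos_ex: "finite S \<Longrightarrow> 0 < (\<Sum>v\<in>S. f v::nat) \<Longrightarrow> \<exists>v\<in>S. 0 < f v"
  by (metis gr0I sum.neutral less_irrefl)

lemma in_kz: "0 < lk (m::'a \<Rightarrow>\<^sub>0 nat) v \<Longrightarrow> v \<in> kz m"
  using in_keys_iff[of v m] by (metis neq0_conv)

lemma mv_vars: "mv n m \<Longrightarrow> 0 < lk m v \<Longrightarrow> v \<in> vars n"
  unfolding mv_def using in_kz[of m v] by blast

lemma acnt_ge: "v \<in> vars n \<Longrightarrow> lk m v \<le> acnt n m (fst v)"
  unfolding acnt_def by (rule member_le_sum) (simp_all add: fin_vars_sub)

lemma bcnt_ge: "v \<in> vars n \<Longrightarrow> k \<in> snd v \<Longrightarrow> lk m v \<le> bcnt n m k"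
  unfolding bcnt_def by (rule member_le_sum) (simp_all add: fin_vars_sub)

lemma top_in:
  assumes mv: "mv n m" and st: "standard m" and pos: "0 < acnt n m im"
    and mx: "\<forall>i. 0 < acnt n m i \<longrightarrow> i \<le> im"
  shows "0 < lk m (im, {k\<in>{1..n}. k \<noteq> im \<and> 0 < bcnt n m k})"
proof -
  define K where "K = {k\<in>{1..n}. k \<noteq> im \<and> 0 < bcnt n m k}"
  define C where "C = {A. 0 < lk m (im, A)}"
  have "\<exists>v\<in>{v\<in>vars n. fst v = im}. 0 < lk m v"
    using pos unfolding acnt_def by (intro sum_pos_ex[OF fin_vars_sub])
  then obtain v where v: "v \<in> {v\<in>vars n. fst v = im}" "0 < lk m v" by blast
  have "v = (im, snd v)" using v(1) by (cases v) simp
  then have "snd v \<in> C" using v(2) unfolding C_def by (metis mem_Collect_eq)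
  then have Cne: "C \<noteq> {}" by blast
  have "C \<subseteq> snd ` kz m"
  proof
    fix A assume "A \<in> C"
    then have "(im, A) \<in> kz m" unfolding C_def using in_kz[of m "(im, A)"] by simp
    then show "A \<in> snd ` kz m" by (metis image_eqI snd_conv)
  qed
  then have Cfin: "finite C" by (meson finite_imageI finite_keys finite_subset)
  define M where "M = Max (card ` C)"
  have "M \<in> card ` C" unfolding M_def using Cne Cfin by simp
  then obtain A0 where A0: "A0 \<in> C" "card A0 = M" by blast
  have A0max: "\<forall>A\<in>C. card A \<le> card A0" unfolding A0(2) M_def using Cfin by simp
  have A0pos: "0 < lk m (im, A0)" using A0 C_def by simp
  have A0v: "(im, A0) \<in> vars n" using mv_vars[OF mv A0pos] .
  have A0sub: "A0 \<subseteq> {1..n}" "im \<notin> A0" using A0v unfolding vars_def by auto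
  have "A0 = K"
  proof
    show "A0 \<subseteq> K"
    proof
      fix k assume k: "k \<in> A0"
      have "lk m (im, A0) \<le> bcnt n m k" using bcnt_ge[OF A0v] k by simp
      then show "k \<in> K" unfolding K_def using k A0sub A0pos by auto
    qed
  next
    show "K \<subseteq> A0"
    proof
      fix k assume k: "k \<in> K"
      then have kb: "0 < bcnt n m k" "k \<noteq> im" unfolding K_def by auto
      have "\<exists>w\<in>{v\<in>vars n. k \<in> snd v}. 0 < lk m w"
        using kb(1) unfolding bcnt_def by (intro sum_pos_ex[OF fin_vars_sub])
      then obtain w where w: "w \<in> {v\<in>vars n. k \<in> snd v}" "0 < lk m w" by blast
      obtain j B where wjB: "w = (j, B)" by (cases w)
      have "lk m w \<le> acnt n m j" using acnt_ge[of w n m] w wjB by simp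
      then have "j \<le> im" using mx w(2) by (meson less_le_trans)
      have nb: "\<not> bad (j, B) (im, A0)" using st w(2) A0pos wjB unfolding standard_def by blast
      have kB: "k \<in> B" using w wjB by simp
      show "k \<in> A0"
      proof (cases "j = im")
        case True
        then have "B \<subseteq> A0 \<or> A0 \<subseteq> B" using nb unfolding bad_def by auto
        then show ?thesis
        proof
          assume "B \<subseteq> A0" then show ?thesis using kB by blast
        next
          assume sub: "A0 \<subseteq> B"
          have "B \<in> C" unfolding C_def using w(2) wjB True by simp
          then have "card B \<le> card A0" using A0max by blast
          moreover have "finite B" using w wjB unfolding vars_def
            using finite_subset[of B "{1..n}"] by auto
          ultimately have "A0 = B" using sub card_subset_eq[of B A0] card_mono[of B A0]
            by (metis card_seteq)
          then show ?thesis using kB by simp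
        qed
      next
        case False
        then have "j < im" using \<open>j \<le> im\<close> by simp
        then have "B - {im} \<subseteq> A0" using nb unfolding bad_def by auto
        then show ?thesis using kB kb(2) by blast
      qed
    qed
  qed
  then show ?thesis using A0pos unfolding K_def by simp
qed

lemma lk_pos_ex: "(m::'a \<Rightarrow>\<^sub>0 nat) \<noteq> 0 \<Longrightarrow> \<exists>v. 0 < lk m v"
proof (rule ccontr)
  assume "m \<noteq> 0" "\<not> (\<exists>v. 0 < lk m v)"
  then have "\<And>v. lk m v = lk 0 v" by simp
  then have "m = 0" by (rule poly_mapping_eqI)
  with \<open>m \<noteq> 0\<close> show False by simp
qed

lemma mdeg_vars: "mv n m \<Longrightarrow> mdeg m = (\<Sum>v\<in>vars n. lk m v)"
  unfolding mv_def by (rule mdeg_sum[OF finite_vars])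

lemma mdeg0: assumes "mv n m" "mdeg m = 0" shows "m = 0"
proof (rule ccontr)
  assume "m \<noteq> 0"
  then obtain v where v: "0 < lk m v" using lk_pos_ex by blast
  then have vv: "v \<in> vars n" using mv_vars[OF assms(1)] by blast
  have "lk m v \<le> (\<Sum>v\<in>vars n. lk m v)" by (rule member_le_sum[OF vv]) (simp_all add: finite_vars)
  then show False using assms mdeg_vars v by simp
qed

lemma acnt_zero_imp: assumes "mv n m" "\<forall>i. acnt n m i = 0" shows "m = 0"
proof (rule ccontr)
  assume "m \<noteq> 0"
  then obtain v where v: "0 < lk m v" using lk_pos_ex by blast
  then have vv: "v \<in> vars n" using mv_vars[OF assms(1)] by blast
  have "lk m v \<le> acnt n m (fst v)" by (rule acnt_ge[OF vv])
  then show False using assms(2) v by simp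
qed

lemma minus_single: assumes "0 < lk m t" shows "m = (m - Poly_Mapping.single t 1) + Poly_Mapping.single t (1::nat)"
proof (rule poly_mapping_eqI)
  fix k show "lk m k = lk (m - Poly_Mapping.single t 1 + Poly_Mapping.single t 1) k"
    using assms by (cases "t = k") (simp_all add: lookup_add lookup_minus lookup_single)
qed

lemma lk_minus_le: "lk ((m::'a \<Rightarrow>\<^sub>0 nat) - s) x \<le> lk m x"
  by (simp add: lookup_minus)

lemma mv_minus: "mv n m \<Longrightarrow> mv n (m - s)"
  unfolding mv_def
proof
  fix x assume a: "kz m \<subseteq> vars n" "x \<in> kz (m - s)"
  then have "0 < lk (m - s) x" using in_keys_iff[of x "m - s"] by simp
  then have "0 < lk m x" using lk_minus_le[of m s x] by linarith
  then show "x \<in> vars n" using a(1) in_kz[of m x] by blast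
qed

lemma standard_minus: "standard m \<Longrightarrow> standard (m - s)"
  unfolding standard_def
proof (intro allI impI)
  fix p q assume st: "\<forall>p q. 0 < lk m p \<longrightarrow> 0 < lk m q \<longrightarrow> \<not> bad p q"
    and a: "0 < lk (m - s) p" "0 < lk (m - s) q"
  have "0 < lk m p" using a(1) lk_minus_le[of m s p] by linarith
  moreover have "0 < lk m q" using a(2) lk_minus_le[of m s q] by linarith
  ultimately show "\<not> bad p q" using st by blast
qed

lemma uniq_aux:
  "\<forall>m m'. mdeg m = N \<longrightarrow> mv n m \<longrightarrow> mv n m' \<longrightarrow> standard m \<longrightarrow> standard m'
     \<longrightarrow> acnt n m = acnt n m' \<longrightarrow> bcnt n m = bcnt n m' \<longrightarrow> m = m'"
proof (induction N)
  case 0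
  show ?case
  proof (intro allI impI)
    fix m m' assume a: "mdeg m = 0" "mv n m" "mv n m'" "standard m" "standard m'"
      "acnt n m = acnt n m'" "bcnt n m = bcnt n m'"
    have m0: "m = 0" using mdeg0 a(1,2) by blast
    have z: "\<And>i. acnt n m i = 0" unfolding m0 acnt_def by simp
    have "\<forall>i. acnt n m' i = 0"
    proof
      fix i show "acnt n m' i = 0" using z[of i] fun_cong[OF a(6), of i] by simp
    qed
    then have "m' = 0" using acnt_zero_imp a(3) by blast
    then show "m = m'" using m0 by simp
  qed
next
  case (Suc N)
  show ?case
  proof (intro allI impI)
    fix m m' assume a: "mdeg m = Suc N" "mv n m" "mv n m'" "standard m" "standard m'"
      "acnt n m = acnt n m'" "bcnt n m = bcnt n m'"
    have "m \<noteq> 0" using a(1) unfolding mdeg_def by auto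
    then obtain v where v: "0 < lk m v" using lk_pos_ex by blast
    have vv: "v \<in> vars n" using mv_vars[OF a(2) v] .
    define I where "I = {i. 0 < acnt n m i}"
    have "I \<subseteq> {1..n}"
    proof
      fix i assume "i \<in> I"
      then have "0 < acnt n m i" unfolding I_def by simp
      then have "\<exists>w\<in>{v\<in>vars n. fst v = i}. 0 < lk m w"
        unfolding acnt_def by (intro sum_pos_ex[OF fin_vars_sub])
      then obtain w where "w \<in> vars n" "fst w = i" by blast
      then show "i \<in> {1..n}" unfolding vars_def by auto
    qed
    then have Ifin: "finite I" using finite_atLeastAtMost by (rule finite_subset)
    have "0 < acnt n m (fst v)" using acnt_ge[OF vv, of m] v by linarith
    then have "fst v \<in> I" unfolding I_def by simp
    then have Ine: "I \<noteq> {}" by blast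
    define im where "im = Max I"
    have pos: "0 < acnt n m im" using Max_in[OF Ifin Ine] unfolding im_def I_def by simp
    have mx: "\<forall>i. 0 < acnt n m i \<longrightarrow> i \<le> im" unfolding im_def I_def
      using Max_ge[OF Ifin] I_def by simp
    define K where "K = {k\<in>{1..n}. k \<noteq> im \<and> 0 < bcnt n m k}"
    define t where "t = (im, K)"
    have t1: "0 < lk m t" unfolding t_def K_def by (rule top_in[OF a(2) a(4) pos mx])
    have pos': "0 < acnt n m' im" using pos a(6) by simp
    have mx': "\<forall>i. 0 < acnt n m' i \<longrightarrow> i \<le> im" using mx a(6) by simp
    have t2: "0 < lk m' t" unfolding t_def K_def a(7) by (rule top_in[OF a(3) a(5) pos' mx'])
    define s where "s = Poly_Mapping.single t (1::nat)"
    have e1: "m = (m - s) + s" unfolding s_def by (rule minus_single[OF t1])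
    have e2: "m' = (m' - s) + s" unfolding s_def by (rule minus_single[OF t2])
    have "mdeg m = mdeg (m - s) + 1" using e1 mdeg_add[of "m - s" s] mdeg_single s_def by simp
    then have dN: "mdeg (m - s) = N" using a(1) by simp
    have ac: "acnt n (m - s) = acnt n (m' - s)"
    proof
      fix i
      have "acnt n m i = acnt n (m - s) i + acnt n s i" using e1 acnt_add by metis
      moreover have "acnt n m' i = acnt n (m' - s) i + acnt n s i" using e2 acnt_add by metis
      ultimately show "acnt n (m - s) i = acnt n (m' - s) i" using a(6) by simp
    qed
    have bc: "bcnt n (m - s) = bcnt n (m' - s)"
    proof
      fix i
      have "bcnt n m i = bcnt n (m - s) i + bcnt n s i" using e1 bcnt_add by metis
      moreover have "bcnt n m' i = bcnt n (m' - s) i + bcnt n s i" using e2 bcnt_add by metis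
      ultimately show "bcnt n (m - s) i = bcnt n (m' - s) i" using a(7) by simp
    qed
    have "m - s = m' - s"
      using Suc.IH dN mv_minus[OF a(2)] mv_minus[OF a(3)] standard_minus[OF a(4)]
        standard_minus[OF a(5)] ac bc by blast
    then show "m = m'" using e1 e2 by metis
  qed
qed

lemma uniq: "mv n m \<Longrightarrow> mv n m' \<Longrightarrow> standard m \<Longrightarrow> standard m'
     \<Longrightarrow> acnt n m = acnt n m' \<Longrightarrow> bcnt n m = bcnt n m' \<Longrightarrow> m = m'"
  using uniq_aux by blast

lemma reduce:
  assumes mvu: "mv n u" and ns: "\<not> standard u"
  shows "\<exists>u'. mv n u' \<and> acnt n u' = acnt n u \<and> bcnt n u' = bcnt n u \<and> mono_less u' u"
proof -
  obtain p q where pq: "0 < lk u p" "0 < lk u q" "bad p q" using ns unfolding standard_def by blast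
  have pnq: "p \<noteq> q" using pq(3) bad_irrefl by metis
  have pv: "p \<in> vars n" using mv_vars[OF mvu pq(1)] .
  have qv: "q \<in> vars n" using mv_vars[OF mvu pq(2)] .
  obtain c d where cd: "tr p q = (c, d)" by (cases "tr p q")
  note T = tr_props[OF pv qv pq(3) cd]
  define r where "r = u - mon p q"
  have ur: "u = r + mon p q"
  proof (rule poly_mapping_eqI)
    fix x
    show "lk u x = lk (r + mon p q) x"
      unfolding r_def lookup_add lookup_minus lk_mon
      using pq(1,2) pnq by (cases "x = p"; cases "x = q") simp_all
  qed
  define u' where "u' = r + mon c d"
  have "mv n r" unfolding r_def by (rule mv_minus[OF mvu])
  then have "mv n u'" unfolding u'_def mv_def
  proof -
    assume a: "kz r \<subseteq> vars n"
    have "kz (r + mon c d) \<subseteq> kz r \<union> kz (mon c d)" by (rule keys_add)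
    also have "\<dots> \<subseteq> vars n" using a T(1,2) unfolding kz_mon by simp
    finally show "kz (r + mon c d) \<subseteq> vars n" .
  qed
  moreover have "acnt n u' = acnt n u"
  proof
    fix i show "acnt n u' i = acnt n u i" unfolding u'_def
      using acnt_add[of n r "mon c d" i] acnt_add[of n r "mon p q" i] ur T(3) by simp
  qed
  moreover have "bcnt n u' = bcnt n u"
  proof
    fix i show "bcnt n u' i = bcnt n u i" unfolding u'_def
      using bcnt_add[of n r "mon c d" i] bcnt_add[of n r "mon p q" i] ur T(4) by simp
  qed
  moreover have "mono_less u' u" unfolding u'_def using mono_less_compat[OF T(5), of r] ur by simp
  ultimately show ?thesis by blast
qed

lemma finite_bounded:
  assumes "finite V"
  shows "finite {u::('a \<Rightarrow>\<^sub>0 nat). kz u \<subseteq> V \<and> (\<forall>v. lk u v \<le> D)}" (is "finite ?S")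
proof -
  have "inj_on lk ?S" by (rule inj_onI) (rule poly_mapping_eqI, simp)
  moreover have "lk ` ?S \<subseteq> {f. \<forall>x. (x \<in> V \<longrightarrow> f x \<in> {0..D}) \<and> (x \<notin> V \<longrightarrow> f x = 0)}"
  proof
    fix f assume "f \<in> lk ` ?S"
    then obtain u where u: "u \<in> ?S" "f = lk u" by blast
    have "\<And>x. x \<notin> V \<Longrightarrow> f x = 0"
    proof -
      fix x assume "x \<notin> V"
      then have "x \<notin> kz u" using u(1) by blast
      then show "f x = 0" using u(2) in_keys_iff[of x u] by simp
    qed
    then show "f \<in> {f. \<forall>x. (x \<in> V \<longrightarrow> f x \<in> {0..D}) \<and> (x \<notin> V \<longrightarrow> f x = 0)}"
      using u by auto
  qed
  then have "finite (lk ` ?S)"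
    by (rule finite_subset) (rule finite_set_of_finite_funs[OF assms], simp)
  ultimately show ?thesis using finite_imageD by blast
qed

lemma mono_less_mdeg: "mono_less u v \<Longrightarrow> mdeg u \<le> mdeg v"
  unfolding mono_less_def by linarith

lemma lk_le_mdeg: "lk u v \<le> mdeg u"
proof (cases "v \<in> kz u")
  case True
  then show ?thesis unfolding mdeg_def by (rule member_le_sum) simp_all
next
  case False
  then show ?thesis using in_keys_iff[of v u] by simp
qed

lemma fiber_min:
  assumes mvm: "mv n m" and st: "standard m" and mvm': "mv n m'"
    and ac: "acnt n m' = acnt n m" and bc: "bcnt n m' = bcnt n m"
  shows "\<not> mono_less m' m"
proof
  assume lt: "mono_less m' m"
  define S where "S = {u. mv n u \<and> acnt n u = acnt n m \<and> bcnt n u = bcnt n m \<and> (u = m' \<or> mono_less u m')}"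
  have "S \<subseteq> {u. kz u \<subseteq> vars n \<and> (\<forall>v. lk u v \<le> mdeg m)}"
  proof
    fix u assume "u \<in> S"
    then have u: "mv n u" "u = m' \<or> mono_less u m'" unfolding S_def by auto
    have "mdeg u \<le> mdeg m'" using u(2) mono_less_mdeg by auto
    also have "\<dots> \<le> mdeg m" using mono_less_mdeg[OF lt] .
    finally have dm: "mdeg u \<le> mdeg m" .
    have "\<forall>v. lk u v \<le> mdeg m"
    proof
      fix v show "lk u v \<le> mdeg m" using lk_le_mdeg[of u v] dm by linarith
    qed
    then show "u \<in> {u. kz u \<subseteq> vars n \<and> (\<forall>v. lk u v \<le> mdeg m)}" using u(1) unfolding mv_def by simp
  qed
  then have Sfin: "finite S" using finite_bounded[OF finite_vars, of n "mdeg m"] by (rule finite_subset)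
  have m'S: "m' \<in> S" unfolding S_def using mvm' ac bc by simp
  then have Sne: "S \<noteq> {}" by blast
  have fsS: "\<And>x. x \<in> S \<Longrightarrow> fsm x" unfolding S_def using mv_fsm by blast
  have "\<exists>s\<in>S. \<forall>y\<in>S. y \<noteq> s \<longrightarrow> mono_less s y"
  proof (rule finite_max_rel[OF Sfin Sne, of "\<lambda>a b. mono_less b a"])
    show "\<forall>x\<in>S. \<forall>y\<in>S. \<forall>z\<in>S. mono_less y x \<longrightarrow> mono_less z y \<longrightarrow> mono_less z x"
      using fsS mono_less_trans by metis
    show "\<forall>x\<in>S. \<forall>y\<in>S. x \<noteq> y \<longrightarrow> mono_less y x \<or> mono_less x y"
      using fsS mono_less_total by metis
  qed
  then obtain s where s: "s \<in> S" "\<forall>y\<in>S. y \<noteq> s \<longrightarrow> mono_less s y" by blast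
  have sS: "mv n s" "acnt n s = acnt n m" "bcnt n s = bcnt n m" "s = m' \<or> mono_less s m'"
    using s(1) unfolding S_def by auto
  have "standard s"
  proof (rule ccontr)
    assume "\<not> standard s"
    then obtain s' where s': "mv n s'" "acnt n s' = acnt n s" "bcnt n s' = bcnt n s" "mono_less s' s"
      using reduce[OF sS(1)] by blast
    have "mono_less s' m'"
      using sS(4) s'(4) mono_less_trans[of s' s m'] fsS[OF s(1)] mv_fsm[OF s'(1)] mv_fsm[OF mvm'] by auto
    then have "s' \<in> S" unfolding S_def using s' sS by simp
    moreover have "s' \<noteq> s" using s'(4) mono_less_irrefl by metis
    ultimately have "mono_less s s'" using s(2) by blast
    then show False using s'(4) mono_less_asym[of s s'] fsS[OF s(1)] mv_fsm[OF s'(1)] by blast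
  qed
  then have "s = m" using uniq[OF sS(1) mvm _ st sS(2) sS(3)] by blast
  then have "m = m' \<or> mono_less m m'" using sS(4) by simp
  then show False using lt mono_less_irrefl mono_less_asym[of m m'] mv_fsm[OF mvm] mv_fsm[OF mvm'] by metis
qed

lemma prod_single:
  assumes "finite S"
  shows "(\<Prod>x\<in>S. Poly_Mapping.single (g x) (1::'k::comm_ring_1)) = Poly_Mapping.single (\<Sum>x\<in>S. g x) 1"
  using assms
proof (induction S rule: finite_induct)
  case empty then show ?case by simp
next
  case (insert x F)
  then show ?case by (simp add: mult_single)
qed

lemma pow_single:
  "Poly_Mapping.single e (1::'k::comm_ring_1) ^ k = Poly_Mapping.single (\<Sum>i<k. e) 1"
proof (induction k)
  case 0 then show ?case by simp
next
  case (Suc k) then show ?case by (simp add: mult_single add.commute)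
qed

definition ev :: "var \<Rightarrow> (nat + nat \<Rightarrow>\<^sub>0 nat)" where
  "ev v = Poly_Mapping.single (Inl (fst v)) 1 + (\<Sum>j\<in>snd v. Poly_Mapping.single (Inr j) 1)"

lemma phi_img_single:
  assumes "fsv v"
  shows "(phi_img v :: (nat + nat, 'k::comm_ring_1) mpoly) = Poly_Mapping.single (ev v) 1"
proof -
  have "(\<Prod>j\<in>snd v. Var (Inr j) :: (nat + nat, 'k) mpoly) = Poly_Mapping.single (\<Sum>j\<in>snd v. Poly_Mapping.single (Inr j) 1) 1"
    unfolding Var_def by (rule prod_single) (use assms fsv_def in simp)
  then show ?thesis unfolding phi_img_def ev_def Var_def by (simp add: mult_single)
qed

definition Em :: "(var \<Rightarrow>\<^sub>0 nat) \<Rightarrow> (nat + nat \<Rightarrow>\<^sub>0 nat)" where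
  "Em m = (\<Sum>v\<in>kz m. \<Sum>i<lk m v. ev v)"

definition img :: "(var \<Rightarrow>\<^sub>0 nat) \<Rightarrow> (nat + nat, 'k::comm_ring_1) mpoly" where
  "img m = (\<Prod>v\<in>kz m. phi_img v ^ lk m v)"

lemma img_single:
  assumes "fsm m"
  shows "(img m :: (nat + nat, 'k::comm_ring_1) mpoly) = Poly_Mapping.single (Em m) 1"
proof -
  have "img m = (\<Prod>v\<in>kz m. (Poly_Mapping.single (ev v) (1::'k)) ^ lk m v)"
    unfolding img_def using assms unfolding fsm_def by (intro prod.cong) (simp_all add: phi_img_single)
  also have "\<dots> = (\<Prod>v\<in>kz m. Poly_Mapping.single (\<Sum>i<lk m v. ev v) (1::'k))"
    by (simp add: pow_single)
  also have "\<dots> = Poly_Mapping.single (Em m) 1" unfolding Em_def by (rule prod_single) simp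
  finally show ?thesis .
qed

lemma lk_ev_Inl: "lk (ev v) (Inl i) = (if fst v = i then 1 else 0)"
  unfolding ev_def by (simp add: lookup_add lookup_sum lookup_single when_def)

lemma lk_ev_Inr: "fsv v \<Longrightarrow> lk (ev v) (Inr k) = (if k \<in> snd v then 1 else 0)"
  unfolding ev_def fsv_def by (simp add: lookup_add lookup_sum lookup_single when_def)

lemma lk_Em: "lk (Em m) x = (\<Sum>v\<in>kz m. lk m v * lk (ev v) x)"
  unfolding Em_def by (simp add: lookup_sum)

lemma acnt_alt: "mv n m \<Longrightarrow> acnt n m i = (\<Sum>v\<in>kz m. lk m v * (if fst v = i then 1 else 0))"
proof -
  assume mv: "mv n m"
  have "acnt n m i = (\<Sum>v\<in>vars n. if fst v = i then lk m v else 0)"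
    unfolding acnt_def using finite_vars by (simp add: sum.inter_filter)
  also have "\<dots> = (\<Sum>v\<in>kz m. if fst v = i then lk m v else 0)"
  proof (rule sum.mono_neutral_right[OF finite_vars])
    show "kz m \<subseteq> vars n" using mv mv_def by simp
    show "\<forall>v\<in>vars n - kz m. (if fst v = i then lk m v else 0) = 0"
      using in_keys_iff by fastforce
  qed
  also have "\<dots> = (\<Sum>v\<in>kz m. lk m v * (if fst v = i then 1 else 0))"
    by (intro sum.cong) simp_all
  finally show ?thesis .
qed

lemma bcnt_alt: "mv n m \<Longrightarrow> bcnt n m k = (\<Sum>v\<in>kz m. lk m v * (if k \<in> snd v then 1 else 0))"
proof -
  assume mv: "mv n m"
  have "bcnt n m k = (\<Sum>v\<in>vars n. if k \<in> snd v then lk m v else 0)"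
    unfolding bcnt_def using finite_vars by (simp add: sum.inter_filter)
  also have "\<dots> = (\<Sum>v\<in>kz m. if k \<in> snd v then lk m v else 0)"
  proof (rule sum.mono_neutral_right[OF finite_vars])
    show "kz m \<subseteq> vars n" using mv mv_def by simp
    show "\<forall>v\<in>vars n - kz m. (if k \<in> snd v then lk m v else 0) = 0"
      using in_keys_iff by fastforce
  qed
  also have "\<dots> = (\<Sum>v\<in>kz m. lk m v * (if k \<in> snd v then 1 else 0))"
    by (intro sum.cong) simp_all
  finally show ?thesis .
qed

lemma Em_Inl: "mv n m \<Longrightarrow> lk (Em m) (Inl i) = acnt n m i"
  unfolding lk_Em lk_ev_Inl by (simp add: acnt_alt)

lemma Em_Inr: "mv n m \<Longrightarrow> lk (Em m) (Inr k) = bcnt n m k"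
proof -
  assume mv: "mv n m"
  have "\<And>v. v \<in> kz m \<Longrightarrow> fsv v" using mv mv_def vars_fsv by blast
  then have "lk (Em m) (Inr k) = (\<Sum>v\<in>kz m. lk m v * (if k \<in> snd v then 1 else 0))"
    unfolding lk_Em by (intro sum.cong) (simp_all add: lk_ev_Inr)
  then show ?thesis using bcnt_alt[OF mv] by simp
qed

lemma Em_eq_iff:
  assumes "mv n m" "mv n m'"
  shows "Em m = Em m' \<longleftrightarrow> acnt n m = acnt n m' \<and> bcnt n m = bcnt n m'"
proof
  assume e: "Em m = Em m'"
  show "acnt n m = acnt n m' \<and> bcnt n m = bcnt n m'"
  proof
    show "acnt n m = acnt n m'"
    proof
      fix i show "acnt n m i = acnt n m' i" using Em_Inl[OF assms(1)] Em_Inl[OF assms(2)] e by metis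
    qed
    show "bcnt n m = bcnt n m'"
    proof
      fix i show "bcnt n m i = bcnt n m' i" using Em_Inr[OF assms(1)] Em_Inr[OF assms(2)] e by metis
    qed
  qed
next
  assume e: "acnt n m = acnt n m' \<and> bcnt n m = bcnt n m'"
  show "Em m = Em m'"
  proof (rule poly_mapping_eqI)
    fix x show "lk (Em m) x = lk (Em m') x"
    proof (cases x)
      case (Inl i) then show ?thesis using Em_Inl[OF assms(1)] Em_Inl[OF assms(2)] e by simp
    next
      case (Inr k) then show ?thesis using Em_Inr[OF assms(1)] Em_Inr[OF assms(2)] e by simp
    qed
  qed
qed

lemma subst_eq:
  "subst phi_img (p :: (var, 'k::comm_ring_1) mpoly) = (\<Sum>m\<in>kz p. const (lk p m) * img m)"
  unfolding subst_def img_def by simp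

lemma subst_superset:
  assumes "finite S" "kz p \<subseteq> S"
  shows "subst phi_img (p :: (var, 'k::comm_ring_1) mpoly) = (\<Sum>m\<in>S. const (lk p m) * img m)"
  unfolding subst_eq
proof (rule sum.mono_neutral_left[OF assms(1,2)])
  show "\<forall>m\<in>S - kz p. const (lk p m) * img m = 0"
    using in_keys_iff unfolding const_def by fastforce
qed

lemma subst_single_mv:
  assumes "\<forall>m\<in>kz p. mv n m"
  shows "subst phi_img (p :: (var, 'k::comm_ring_1) mpoly) = (\<Sum>m\<in>kz p. Poly_Mapping.single (Em m) (lk p m))"
  unfolding subst_eq
proof (rule sum.cong[OF refl])
  fix m assume "m \<in> kz p"
  then have "fsm m" using assms mv_fsm by blast
  then show "const (lk p m) * img m = Poly_Mapping.single (Em m) (lk p m)"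
    unfolding const_def by (simp add: img_single mult_single)
qed

definition binom :: "var \<Rightarrow> var \<Rightarrow> (var, 'k::comm_ring_1) mpoly" where
  "binom p q = Var p * Var q - Var (fst (tr p q)) * Var (snd (tr p q))"

lemma Var_mult: "(Var p * Var q :: (var, 'k::comm_ring_1) mpoly) = Poly_Mapping.single (mon p q) 1"
  unfolding Var_def mon_def by (simp add: mult_single)

lemma binom_sym: "p \<in> vars n \<Longrightarrow> q \<in> vars n \<Longrightarrow> binom q p = binom p q"
  unfolding binom_def using tr_sym by (metis mult.commute)

lemma mv_mon: "p \<in> vars n \<Longrightarrow> q \<in> vars n \<Longrightarrow> mv n (mon p q)"
  unfolding mv_def kz_mon by simp

lemma lm_eq:
  assumes fs: "\<forall>m\<in>kz f. fsm m" and m: "m \<in> kz f" and mx: "\<forall>m'\<in>kz f. m' \<noteq> m \<longrightarrow> mono_less m' m"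
  shows "lm f = m"
  unfolding lm_def
proof (rule the_equality)
  show "m \<in> kz f \<and> (\<forall>m'\<in>kz f. m' \<noteq> m \<longrightarrow> mono_less m' m)" using m mx by blast
next
  fix m2 assume a: "m2 \<in> kz f \<and> (\<forall>m'\<in>kz f. m' \<noteq> m2 \<longrightarrow> mono_less m' m2)"
  show "m2 = m"
  proof (rule ccontr)
    assume ne: "m2 \<noteq> m"
    have "mono_less m m2" using a m ne by metis
    moreover have "mono_less m2 m" using mx a ne by blast
    ultimately show False using mono_less_asym[of m m2] fs m a by blast
  qed
qed

lemma binom_props:
  assumes p: "p \<in> vars n" and q: "q \<in> vars n" and b: "bad p q" and cd: "tr p q = (c, d)"
  shows "mon c d \<noteq> mon p q"
    "kz (binom p q :: (var, 'k::field) mpoly) = {mon p q, mon c d}"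
    "lk (binom p q :: (var, 'k::field) mpoly) (mon p q) = 1"
    "(binom p q :: (var, 'k::field) mpoly) \<noteq> 0"
    "lm (binom p q :: (var, 'k::field) mpoly) = mon p q"
    "lc (binom p q :: (var, 'k::field) mpoly) = 1"
    "in_vars (vars n) (binom p q :: (var, 'k::field) mpoly)"
    "subst phi_img (binom p q :: (var, 'k::field) mpoly) = 0"
proof -
  note T = tr_props[OF p q b cd]
  show ne: "mon c d \<noteq> mon p q" using T(5) mono_less_irrefl by metis
  have be: "(binom p q :: (var, 'k) mpoly) = Poly_Mapping.single (mon p q) 1 - Poly_Mapping.single (mon c d) 1"
    unfolding binom_def cd Var_mult by simp
  have l1: "lk (binom p q :: (var, 'k) mpoly) (mon p q) = 1" unfolding be using ne
    by (simp add: lookup_minus lookup_single when_def)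
  have l2: "lk (binom p q :: (var, 'k) mpoly) (mon c d) = -1" unfolding be using ne
    by (simp add: lookup_minus lookup_single when_def)
  have l3: "\<And>x. x \<noteq> mon p q \<Longrightarrow> x \<noteq> mon c d \<Longrightarrow> lk (binom p q :: (var, 'k) mpoly) x = 0"
    unfolding be by (simp add: lookup_minus lookup_single when_def)
  show K: "kz (binom p q :: (var, 'k) mpoly) = {mon p q, mon c d}"
  proof (rule set_eqI)
    fix x
    show "x \<in> kz (binom p q :: (var, 'k) mpoly) \<longleftrightarrow> x \<in> {mon p q, mon c d}"
      unfolding in_keys_iff using l1 l2 l3 by (cases "x = mon p q"; cases "x = mon c d") auto
  qed
  show "lk (binom p q :: (var, 'k) mpoly) (mon p q) = 1" by (rule l1)
  show "(binom p q :: (var, 'k) mpoly) \<noteq> 0" using l1 by (metis lookup_zero zero_neq_one)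
  have mvs: "mv n (mon p q)" "mv n (mon c d)" using mv_mon p q T(1,2) by auto
  have fs: "\<forall>m\<in>kz (binom p q :: (var, 'k) mpoly). fsm m" unfolding K using mvs mv_fsm by blast
  show lm: "lm (binom p q :: (var, 'k) mpoly) = mon p q"
    by (rule lm_eq[OF fs]) (use K T(5) in auto)
  show "lc (binom p q :: (var, 'k) mpoly) = 1" unfolding lc_def lm by (rule l1)
  show "in_vars (vars n) (binom p q :: (var, 'k) mpoly)" unfolding in_vars_def K
    using mvs unfolding mv_def by blast
  have ie: "(img (mon p q) :: (nat + nat, 'k) mpoly) = img (mon c d)"
    using img_single[OF mv_fsm[OF mvs(1)]] img_single[OF mv_fsm[OF mvs(2)]]
      Em_eq_iff[OF mvs(1) mvs(2)] T(3,4) by metis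
  have "subst phi_img (binom p q :: (var, 'k) mpoly) =
      (\<Sum>m\<in>{mon p q, mon c d}. const (lk (binom p q :: (var, 'k) mpoly) m) * img m)"
    by (rule subst_superset) (simp_all add: K)
  also have "\<dots> = const 1 * img (mon p q) + const (-1) * img (mon c d)"
    using ne l1 l2 by simp
  also have "\<dots> = 0" unfolding ie const_def by (simp add: single_uminus)
  finally show "subst phi_img (binom p q :: (var, 'k) mpoly) = 0" .
qed

lemma vars_allvars: "vars n \<subseteq> allvars n" unfolding vars_def allvars_def by auto

lemma mon_eq:
  assumes pq: "p \<noteq> q" and e: "mon p q = mon x y"
  shows "(p = x \<and> q = y) \<or> (p = y \<and> q = x)"
proof -
  have "lk (mon p q) p = 1" using pq by (simp add: lk_mon)
  then have lp: "lk (mon x y) p = 1" using e by simp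
  have "lk (mon p q) q = 1" using pq by (simp add: lk_mon)
  then have lq: "lk (mon x y) q = 1" using e by simp
  have "p = x \<or> p = y" using lp unfolding lk_mon by (cases "x = p"; cases "y = p") simp_all
  moreover have "q = x \<or> q = y" using lq unfolding lk_mon by (cases "x = q"; cases "y = q") simp_all
  moreover have "x \<noteq> y"
  proof
    assume xy: "x = y"
    have "lk (mon x y) x = 2" unfolding xy lk_mon by simp
    moreover have "lk (mon p q) x \<le> 1" using pq unfolding lk_mon by (cases "p = x"; cases "q = x") simp_all
    ultimately show False using e by simp
  qed
  ultimately show ?thesis using pq by blast
qed

lemma mdvd_mon:
  assumes pq: "p \<noteq> q" and dv: "mdvd (mon p q) (mon x y)"
  shows "mon p q = mon x y"
proof -
  have "lk (mon p q) p \<le> lk (mon x y) p" using dv unfolding mdvd_def by blast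
  then have "1 \<le> lk (mon x y) p" using pq unfolding lk_mon by simp
  then have px: "p = x \<or> p = y" unfolding lk_mon by (cases "x = p"; cases "y = p") simp_all
  have "lk (mon p q) q \<le> lk (mon x y) q" using dv unfolding mdvd_def by blast
  then have "1 \<le> lk (mon x y) q" using pq unfolding lk_mon by simp
  then have qx: "q = x \<or> q = y" unfolding lk_mon by (cases "x = q"; cases "y = q") simp_all
  have "(p = x \<and> q = y) \<or> (p = y \<and> q = x)" using px qx pq by blast
  then show ?thesis using mon_sym by metis
qed

lemma kz_diff:
  assumes "x \<noteq> y"
  shows "kz (Poly_Mapping.single x 1 - Poly_Mapping.single y (1::'k::field)) = {x, y}"
proof (rule set_eqI)
  fix z
  show "z \<in> kz (Poly_Mapping.single x 1 - Poly_Mapping.single y (1::'k::field)) \<longleftrightarrow> z \<in> {x, y}"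
    unfolding in_keys_iff using assms
    by (cases "z = x"; cases "z = y") (simp_all add: lookup_minus lookup_single when_def)
qed

lemma B0:
  assumes p: "(i, A) \<in> vars n" and q: "(j, B) \<in> vars n" and ij: "i \<le> j" and b: "bad (i, A) (j, B)"
  shows "(binom (i, A) (j, B) :: (var, 'k::field) mpoly) \<in> T n"
proof -
  have vp: "i \<notin> A" using p unfolding vars_def by simp
  have vq: "j \<notin> B" using q unfolding vars_def by simp
  have ap: "(i, A) \<in> allvars n" and aq: "(j, B) \<in> allvars n" using p q vars_allvars by auto
  have tr: "tr (i, A) (j, B) = ((i, (A \<inter> B) \<union> ({j} \<inter> A)), (j, (A - {j}) \<union> B))"
    unfolding tr_def tr0_def using ij by simp
  have be: "(binom (i, A) (j, B) :: (var, 'k) mpoly) =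
      Var (i, A) * Var (j, B) - Var (i, (A \<inter> B) \<union> ({j} \<inter> A)) * Var (j, (A - {j}) \<union> B)"
    unfolding binom_def tr by simp
  show ?thesis
  proof (cases "j \<in> A")
    case True
    then have ilj: "i < j" using vp ij by (cases "i = j") auto
    have inc: "incomparable (i, A) (j, B)" unfolding incomparable_def leqL_def using True vq ilj by auto
    have "{j} \<inter> A = {j}" using True by blast
    then have "(binom (i, A) (j, B) :: (var, 'k) mpoly) =
      Var (i, A) * Var (j, B) - Var (i, (A \<inter> B) \<union> {j}) * Var (j, (A - {j}) \<union> B)" using be by simp
    then have "(binom (i, A) (j, B) :: (var, 'k) mpoly) \<in> T2 n"
      unfolding T2_def using ap aq ilj vp vq True inc by blast
    then show ?thesis unfolding T_def by blast
  next
    case False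
    have e1: "(A \<inter> B) \<union> ({j} \<inter> A) = A \<inter> B" using False by blast
    have e2: "(A - {j}) \<union> B = A \<union> B" using False by blast
    have inc: "incomparable (i, A) (j, B)"
    proof (cases "i = j")
      case True then show ?thesis using b unfolding bad_def incomparable_def leqL_def by auto
    next
      case False
      then have "i < j" using ij by simp
      then have "\<not> A \<subseteq> B" using b \<open>j \<notin> A\<close> unfolding bad_def by auto
      then show ?thesis unfolding incomparable_def leqL_def using \<open>i < j\<close> by auto
    qed
    have "(binom (i, A) (j, B) :: (var, 'k) mpoly) =
      Var (i, A) * Var (j, B) - Var (min i j, A \<inter> B) * Var (max i j, A \<union> B)"
      using be e1 e2 ij by (simp add: min_def max_def)
    then have g: "(binom (i, A) (j, B) :: (var, 'k) mpoly) \<in> G_L n"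
      unfolding G_L_def using ap aq inc by blast
    obtain c d where cd: "tr (i, A) (j, B) = (c, d)" by (cases "tr (i, A) (j, B)")
    have "in_vars (vars n) (binom (i, A) (j, B) :: (var, 'k) mpoly)"
      by (rule binom_props(7)[OF p q b cd])
    then show ?thesis using g unfolding T_def T1_def by blast
  qed
qed

lemma binom_in_T:
  assumes p: "p \<in> vars n" and q: "q \<in> vars n" and b: "bad p q"
  shows "(binom p q :: (var, 'k::field) mpoly) \<in> T n"
proof -
  obtain i A where pi: "p = (i, A)" by (cases p)
  obtain j B where qj: "q = (j, B)" by (cases q)
  show ?thesis
  proof (cases "i \<le> j")
    case True then show ?thesis using B0[of i A n j B] p q b pi qj by simp
  next
    case False
    then have "j \<le> i" by simp
    then have "(binom q p :: (var, 'k) mpoly) \<in> T n" using B0[of j B n i A] p q b bad_sym pi qj by metis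
    moreover have "(binom q p :: (var, 'k) mpoly) = binom p q" by (rule binom_sym[OF p q])
    ultimately show ?thesis by simp
  qed
qed

lemma G0:
  assumes ap: "(i, A) \<in> allvars n" and aq: "(j, B) \<in> allvars n" and ij: "i \<le> j"
    and inc: "incomparable (i, A) (j, B)" and iv: "in_vars (vars n) g"
    and ge: "g = Var (i, A) * Var (j, B) - Var (min i j, A \<inter> B) * Var (max i j, A \<union> B)"
  shows "\<exists>p q. p \<in> vars n \<and> q \<in> vars n \<and> bad p q \<and> g = (binom p q :: (var, 'k::field) mpoly)"
proof -
  define c where "c = (i, A \<inter> B)"
  define d where "d = (j, A \<union> B)"
  have ge2: "g = Var (i, A) * Var (j, B) - Var c * Var d" using ge ij unfolding c_def d_def
    by (simp add: min_def max_def)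
  have g3: "g = Poly_Mapping.single (mon (i, A) (j, B)) 1 - Poly_Mapping.single (mon c d) 1"
    using ge2 Var_mult by metis
  have pq: "(i, A) \<noteq> (j, B)" using inc unfolding incomparable_def leqL_def by auto
  have lcd: "leqL c d" unfolding c_def d_def leqL_def using ij by auto
  have ne: "mon (i, A) (j, B) \<noteq> mon c d"
  proof
    assume "mon (i, A) (j, B) = mon c d"
    then have "((i, A) = c \<and> (j, B) = d) \<or> ((i, A) = d \<and> (j, B) = c)" using mon_eq[OF pq] by blast
    then show False using inc lcd unfolding incomparable_def by blast
  qed
  have K: "kz g = {mon (i, A) (j, B), mon c d}" unfolding g3 by (rule kz_diff[OF ne])
  have "kz (mon (i, A) (j, B)) \<subseteq> vars n" "kz (mon c d) \<subseteq> vars n"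
    using iv unfolding in_vars_def K by auto
  then have vs: "(i, A) \<in> vars n" "(j, B) \<in> vars n" "c \<in> vars n" "d \<in> vars n" unfolding kz_mon by auto
  have jA: "j \<notin> A" using vs(4) unfolding d_def vars_def by auto
  have b: "bad (i, A) (j, B)"
  proof (cases "i = j")
    case True then show ?thesis using inc unfolding bad_def incomparable_def leqL_def by auto
  next
    case False
    then have "i < j" using ij by simp
    then have "\<not> A \<subseteq> B" using inc unfolding incomparable_def leqL_def by auto
    then show ?thesis using \<open>i < j\<close> jA unfolding bad_def by auto
  qed
  have tr: "tr (i, A) (j, B) = (c, d)"
  proof -
    have "tr (i, A) (j, B) = ((i, (A \<inter> B) \<union> ({j} \<inter> A)), (j, (A - {j}) \<union> B))"
      unfolding tr_def tr0_def using ij by simp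
    moreover have "(A \<inter> B) \<union> ({j} \<inter> A) = A \<inter> B" using jA by blast
    moreover have "(A - {j}) \<union> B = A \<union> B" using jA by blast
    ultimately show ?thesis unfolding c_def d_def by simp
  qed
  have "g = (binom (i, A) (j, B) :: (var, 'k) mpoly)" unfolding binom_def tr using ge2 by simp
  then show ?thesis using vs b by blast
qed

lemma T_char:
  assumes g: "g \<in> T n" and nz: "g \<noteq> 0"
  shows "\<exists>p q. p \<in> vars n \<and> q \<in> vars n \<and> bad p q \<and> g = (binom p q :: (var, 'k::field) mpoly)"
proof (cases "g \<in> T1 n")
  case True
  then have iv: "in_vars (vars n) g" and "g \<in> G_L n" unfolding T1_def by auto
  then obtain i A j B where ap: "(i, A) \<in> allvars n" and aq: "(j, B) \<in> allvars n"
    and inc: "incomparable (i, A) (j, B)"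
    and ge: "g = Var (i, A) * Var (j, B) - Var (min i j, A \<inter> B) * Var (max i j, A \<union> B)"
    unfolding G_L_def by blast
  show ?thesis
  proof (cases "i \<le> j")
    case True then show ?thesis using G0[OF ap aq True inc iv ge] by blast
  next
    case False
    then have ji: "j \<le> i" by simp
    have inc': "incomparable (j, B) (i, A)" using inc unfolding incomparable_def by blast
    have ge': "g = Var (j, B) * Var (i, A) - Var (min j i, B \<inter> A) * Var (max j i, B \<union> A)"
      using ge by (simp add: mult.commute Int_commute Un_commute min.commute max.commute)
    show ?thesis using G0[OF aq ap ji inc' iv ge'] by blast
  qed
next
  case False
  then have "g \<in> T2 n" using g unfolding T_def by blast
  then obtain i A j B where ap: "(i, A) \<in> allvars n" and aq: "(j, B) \<in> allvars n"
    and ij: "i < j" and iA: "i \<notin> A" and jB: "j \<notin> B" and jA: "j \<in> A"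
    and ge: "g = Var (i, A) * Var (j, B) - Var (i, (A \<inter> B) \<union> {j}) * Var (j, (A - {j}) \<union> B)"
    unfolding T2_def by blast
  have vp: "(i, A) \<in> vars n" using ap iA unfolding allvars_def vars_def by auto
  have vq: "(j, B) \<in> vars n" using aq jB unfolding allvars_def vars_def by auto
  have nsub: "\<not> (A - {j} \<subseteq> B)"
  proof
    assume sub: "A - {j} \<subseteq> B"
    have "(A \<inter> B) \<union> {j} = A" using sub jA by blast
    moreover have "(A - {j}) \<union> B = B" using sub by blast
    ultimately have "g = 0" using ge by simp
    with nz show False by simp
  qed
  have b: "bad (i, A) (j, B)" unfolding bad_def using ij nsub by simp
  have tr: "tr (i, A) (j, B) = ((i, (A \<inter> B) \<union> {j}), (j, (A - {j}) \<union> B))"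
  proof -
    have "{j} \<inter> A = {j}" using jA by blast
    then show ?thesis unfolding tr_def tr0_def using ij by simp
  qed
  have "g = (binom (i, A) (j, B) :: (var, 'k) mpoly)" unfolding binom_def tr using ge by simp
  then show ?thesis using vp vq b by blast
qed

lemma lm_max:
  assumes nz: "f \<noteq> 0" and mvs: "\<forall>m\<in>kz f. mv n m"
  shows "lm f \<in> kz f \<and> (\<forall>m'\<in>kz f. m' \<noteq> lm f \<longrightarrow> mono_less m' (lm f))"
proof -
  have fs: "\<forall>m\<in>kz f. fsm m" using mvs mv_fsm by blast
  have ne: "kz f \<noteq> {}" using nz by simp
  have "\<exists>m\<in>kz f. \<forall>y\<in>kz f. y \<noteq> m \<longrightarrow> mono_less y m"
  proof (rule finite_max_rel[OF finite_keys ne])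
    show "\<forall>x\<in>kz f. \<forall>y\<in>kz f. \<forall>z\<in>kz f. mono_less x y \<longrightarrow> mono_less y z \<longrightarrow> mono_less x z"
      using fs mono_less_trans by metis
    show "\<forall>x\<in>kz f. \<forall>y\<in>kz f. x \<noteq> y \<longrightarrow> mono_less x y \<or> mono_less y x"
      using fs mono_less_total by metis
  qed
  then obtain m where m: "m \<in> kz f" "\<forall>y\<in>kz f. y \<noteq> m \<longrightarrow> mono_less y m" by blast
  have "lm f = m" by (rule lm_eq[OF fs m(1) m(2)])
  then show ?thesis using m by simp
qed

lemma T_sub: "(T n - {0} :: (var, 'k::field) mpoly set) \<subseteq> (\<lambda>(p, q). binom p q) ` (vars n \<times> vars n)"
proof
  fix g :: "(var, 'k) mpoly" assume "g \<in> T n - {0}"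
  then obtain p q where "p \<in> vars n" "q \<in> vars n" "g = binom p q" using T_char by blast
  then show "g \<in> (\<lambda>(p, q). binom p q) ` (vars n \<times> vars n)" by force
qed

lemma GB_part:
  assumes fI: "f \<in> (I_phi n :: (var, 'k::field) mpoly set)" and nz: "f \<noteq> 0"
  shows "\<exists>g\<in>(T n - {0} :: (var, 'k) mpoly set). mdvd (lm g) (lm f)"
proof -
  have iv: "in_vars (vars n) f" and sz: "subst phi_img f = 0" using fI unfolding I_phi_def by auto
  have mvs: "\<forall>m\<in>kz f. mv n m" using iv unfolding in_vars_def mv_def by blast
  define m0 where "m0 = lm f"
  have m0: "m0 \<in> kz f" "\<forall>m'\<in>kz f. m' \<noteq> m0 \<longrightarrow> mono_less m' m0"
    using lm_max[OF nz mvs] unfolding m0_def by auto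
  have mv0: "mv n m0" using mvs m0(1) by blast
  show ?thesis
  proof (cases "standard m0")
    case False
    then obtain p q where pq: "0 < lk m0 p" "0 < lk m0 q" "bad p q" unfolding standard_def by blast
    have pnq: "p \<noteq> q" using pq(3) bad_irrefl by metis
    have pv: "p \<in> vars n" using mv_vars[OF mv0 pq(1)] .
    have qv: "q \<in> vars n" using mv_vars[OF mv0 pq(2)] .
    obtain c d where cd: "tr p q = (c, d)" by (cases "tr p q")
    note BP = binom_props[OF pv qv pq(3) cd]
    have gT: "(binom p q :: (var, 'k) mpoly) \<in> T n - {0}" using binom_in_T[OF pv qv pq(3)] BP(4) by simp
    have "mdvd (mon p q) m0" unfolding mdvd_def
    proof
      fix w show "lk (mon p q) w \<le> lk m0 w"
        unfolding lk_mon using pq(1,2) pnq by (cases "p = w"; cases "q = w") simp_all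
    qed
    then show ?thesis using gT BP(5) unfolding m0_def by metis
  next
    case True
    have "\<exists>m\<in>kz f. m \<noteq> m0 \<and> Em m = Em m0"
    proof (rule ccontr)
      assume nex: "\<not> (\<exists>m\<in>kz f. m \<noteq> m0 \<and> Em m = Em m0)"
      have "lk (subst phi_img f) (Em m0) = (\<Sum>m\<in>kz f. lk (Poly_Mapping.single (Em m) (lk f m)) (Em m0))"
        unfolding subst_single_mv[OF mvs] by (simp add: lookup_sum)
      also have "\<dots> = (\<Sum>m\<in>kz f. if m = m0 then lk f m else 0)"
      proof (rule sum.cong[OF refl])
        fix m assume "m \<in> kz f"
        then show "lk (Poly_Mapping.single (Em m) (lk f m)) (Em m0) = (if m = m0 then lk f m else 0)"
          using nex by (cases "m = m0") (auto simp: lookup_single when_def)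
      qed
      also have "\<dots> = lk f m0" using m0(1) by (simp add: sum.delta')
      finally have "lk f m0 = 0" using sz by simp
      then show False using m0(1) in_keys_iff[of m0 f] by simp
    qed
    then obtain m where m: "m \<in> kz f" "m \<noteq> m0" "Em m = Em m0" by blast
    have mvm: "mv n m" using mvs m(1) by blast
    have cnt: "acnt n m = acnt n m0" "bcnt n m = bcnt n m0" using Em_eq_iff[OF mvm mv0] m(3) by auto
    have "mono_less m m0" using m0(2) m(1,2) by blast
    moreover have "\<not> mono_less m m0" by (rule fiber_min[OF mv0 True mvm cnt])
    ultimately show ?thesis by simp
  qed
qed

theorem theorem3p6:
  fixes n :: nat
  shows "(I_phi n :: (var, 'k::field) mpoly set) = I_phi' n \<inter> {p. in_vars (vars n) p}
         \<and> is_reduced_GB (I_phi n) (T n - {0} :: (var, 'k::field) mpoly set)"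
proof
  show "(I_phi n :: (var, 'k::field) mpoly set) = I_phi' n \<inter> {p. in_vars (vars n) p}"
  proof (rule set_eqI)
    fix p :: "(var, 'k) mpoly"
    have "in_vars (vars n) p \<Longrightarrow> in_vars (allvars n) p"
      unfolding in_vars_def using vars_allvars by blast
    then show "p \<in> I_phi n \<longleftrightarrow> p \<in> I_phi' n \<inter> {p. in_vars (vars n) p}"
      unfolding I_phi_def I_phi'_def by auto
  qed
next
  let ?G = "T n - {0} :: (var, 'k::field) mpoly set"
  have fin: "finite ?G"
    by (rule finite_subset[OF T_sub]) (simp add: finite_vars)
  have sub: "?G \<subseteq> I_phi n"
  proof
    fix g assume "g \<in> ?G"
    then obtain p q where pq: "p \<in> vars n" "q \<in> vars n" "bad p q" "g = binom p q"
      using T_char by blast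
    obtain c d where cd: "tr p q = (c, d)" by (cases "tr p q")
    note BP = binom_props[OF pq(1,2,3) cd]
    show "g \<in> I_phi n" unfolding I_phi_def using BP(7,8) pq(4) by simp
  qed
  have gb: "\<forall>f\<in>(I_phi n :: (var, 'k) mpoly set). f \<noteq> 0 \<longrightarrow> (\<exists>g\<in>?G. mdvd (lm g) (lm f))"
    using GB_part[where 'k='k] by blast
  have mon: "\<forall>g\<in>?G. g \<noteq> 0 \<and> lc g = 1"
  proof
    fix g assume "g \<in> ?G"
    then obtain p q where pq: "p \<in> vars n" "q \<in> vars n" "bad p q" "g = binom p q"
      using T_char by blast
    obtain c d where cd: "tr p q = (c, d)" by (cases "tr p q")
    note BP = binom_props[OF pq(1,2,3) cd]
    show "g \<noteq> 0 \<and> lc g = 1" using BP(4,6) pq(4) by simp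
  qed
  have red: "\<forall>g\<in>?G. \<forall>h\<in>?G. g \<noteq> h \<longrightarrow> (\<forall>m\<in>kz g. \<not> mdvd (lm h) m)"
  proof (intro ballI impI)
    fix g h m assume gG: "g \<in> ?G" and hG: "h \<in> ?G" and gh: "g \<noteq> h" and mg: "m \<in> kz g"
    obtain p q where pq: "p \<in> vars n" "q \<in> vars n" "bad p q" "g = binom p q"
      using T_char gG by blast
    obtain p' q' where pq': "p' \<in> vars n" "q' \<in> vars n" "bad p' q'" "h = binom p' q'"
      using T_char hG by blast
    obtain c d where cd: "tr p q = (c, d)" by (cases "tr p q")
    obtain c' d' where cd': "tr p' q' = (c', d')" by (cases "tr p' q'")
    note BP = binom_props[OF pq(1,2,3) cd]
    note BP' = binom_props[OF pq'(1,2,3) cd']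
    have pnq': "p' \<noteq> q'" using pq'(3) bad_irrefl by metis
    have lmh0: "lm (binom p' q' :: (var, 'k) mpoly) = mon p' q'" by (rule binom_props(5)[OF pq'(1,2,3) cd'])
    have lmh: "lm h = mon p' q'" using lmh0 pq'(4) by simp
    have K: "kz (binom p q :: (var, 'k) mpoly) = {mon p q, mon c d}" by (rule binom_props(2)[OF pq(1,2,3) cd])
    have mm: "m = mon p q \<or> m = mon c d" using mg K pq(4) by simp
    show "\<not> mdvd (lm h) m"
    proof
      assume dv: "mdvd (lm h) m"
      show False
      proof (cases "m = mon p q")
        case True
        then have "mon p' q' = mon p q" using mdvd_mon[OF pnq'] dv lmh by metis
        then have "(p' = p \<and> q' = q) \<or> (p' = q \<and> q' = p)" using mon_eq[OF pnq'] by blast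
        then have "h = g"
        proof
          assume "p' = p \<and> q' = q" then show "h = g" using pq(4) pq'(4) by simp
        next
          assume "p' = q \<and> q' = p"
          then have "h = binom q p" using pq'(4) by simp
          also have "\<dots> = binom p q" by (rule binom_sym[OF pq(1,2)])
          finally show "h = g" using pq(4) by simp
        qed
        then show False using gh by simp
      next
        case False
        then have "m = mon c d" using mm by simp
        then have "mon p' q' = mon c d" using mdvd_mon[OF pnq'] dv lmh by metis
        then have "(p' = c \<and> q' = d) \<or> (p' = d \<and> q' = c)" using mon_eq[OF pnq'] by blast
        then have "bad c d" using pq'(3) bad_sym by metis
        then show False using tr_props(6)[OF pq(1,2,3) cd] by simp
      qed
    qed
  qed
  show "is_reduced_GB (I_phi n) ?G" unfolding is_reduced_GB_def
    using fin sub gb mon red by blast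
qed

end
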